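(* Assume the standing setting of the context. Let $(x,y)\in\Lambda$ with $y>0$, and suppose $(x,y)$ is the winner at some point $(a,b)\in\Omega$. Then \[ \frac{x_0-1}{y_0}\le\frac{x-1}{y}<\frac{x_0-1}{y_0}+n\alpha, \] so the point $\big(\frac{x-1}{y},1\big)$ lies in $\Omega$, on its top edge. Moreover, $(x,y)$ is the winner at $\big(\frac{x-1}{y},1\big)$.
   Context: Setting. Let $(X,\omega)$ be a Veech translation surface and fix a cusp of its Veech group, normalized by a matrix $C\in\mathrm{SL}_2(\mathbb{R})$ as in Kumanduri–Sanchez–Wang. Let $\Lambda\subset\mathbb{R}^2$ be the set of holonomy vectors of saddle connections of the normalized surface $C\cdot(X,\omega)$; it is a discrete set. Distinguished vector. Let $(x_0,y_0)\in\Lambda$ be the vector such that $y_0>0$ is the smallest positive $y$-component of vectors of $\Lambda$, and $x_0>0$ is the smallest positive $x$-component among vectors of $\Lambda$ with $y$-component $y_0$. In particular, $y\ge y_0$ for every $(x,y)\in\Lambda$ with $y>0$. Cusp parameters. $\alpha>0$ is the cusp width parameter and $n\in\{1,2\}$; $n=2$ exactly when the parabolic generator of the cusp has eigenvalue $-1$. Transversal. \[ \Omega=\Big\{(a,b)\in\mathbb{R}^2: 0<b\le1,\ \tfrac{x_0}{y_0}b-\tfrac1{y_0}\le a<(\tfrac{x_0}{y_0}+n\alpha)b-\tfrac1{y_0}\Big\}. \] Its top edge is identified with the interval \[ A=\Big[\tfrac{x_0-1}{y_0},\tfrac{x_0-1}{y_0}+n\alpha\Big) \] via $a\mapsto(a,1)$.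 Winners. A vector $(x,y)\in\Lambda$ is a candidate winning vector at $(a,b)$ if $y>0$ and $0<bx-ay\le1$. For vectors with positive $y$-component, $(u,v)$ has slope at most that of $(x,y)$ iff $u/v\ge x/y$. The winner at $(a,b)\in\Omega$ is the candidate with the largest value of $x/y$ (least slope); if several share it, the winner is the shortest of them. *)

theory Defs
  imports "HOL-Analysis.Analysis"
begin

text \<open>Vectors of the plane are pairs (x, y) :: real \<times> real.
  Lam is the set of holonomy vectors of saddle connections of the normalized surface.\<close>

definition candidate :: "(real \<times> real) set \<Rightarrow> real \<Rightarrow> real \<Rightarrow> real \<times> real \<Rightarrow> bool" where
  "candidate Lam a b v \<longleftrightarrow> v \<in> Lam \<and> snd v > 0 \<and>
     0 < b * fst v - a * snd v \<and> b * fst v - a * snd v \<le> 1"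

definition winner :: "(real \<times> real) set \<Rightarrow> real \<Rightarrow> real \<Rightarrow> real \<times> real \<Rightarrow> bool" where
  "winner Lam a b v \<longleftrightarrow> candidate Lam a b v \<and>
     (\<forall>w. candidate Lam a b w \<longrightarrow> fst w / snd w \<le> fst v / snd v) \<and>
     (\<forall>w. candidate Lam a b w \<and> fst w / snd w = fst v / snd v \<longrightarrow> norm v \<le> norm w)"

definition Omega :: "real \<Rightarrow> real \<Rightarrow> real \<Rightarrow> nat \<Rightarrow> (real \<times> real) set" where
  "Omega x0 y0 \<alpha> n = {(a, b). 0 < b \<and> b \<le> 1 \<and>
     x0 / y0 * b - 1 / y0 \<le> a \<and> a < (x0 / y0 + real n * \<alpha>) * b - 1 / y0}"

end

theory Submission
  imports Defs
begin

theorem lemma3p1: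
  fixes Lam :: "(real \<times> real) set" and x0 y0 \<alpha> x y a b :: real and n :: nat
  assumes discrete: "\<And>r. finite {v \<in> Lam. norm v \<le> r}"
    and x0y0_in: "(x0, y0) \<in> Lam"
    and y0_pos: "y0 > 0"
    and y0_min: "\<And>u v. (u, v) \<in> Lam \<Longrightarrow> v > 0 \<Longrightarrow> y0 \<le> v"
    and x0_pos: "x0 > 0"
    and x0_min: "\<And>u. (u, y0) \<in> Lam \<Longrightarrow> u > 0 \<Longrightarrow> x0 \<le> u"
    and alpha_pos: "\<alpha> > 0"
    and n_cases: "n \<in> {1, 2}"
    and xy_in: "(x, y) \<in> Lam"
    and y_pos: "y > 0"
    and ab_in: "(a, b) \<in> Omega x0 y0 \<alpha> n"
    and win: "winner Lam a b (x, y)"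
  shows "(x0 - 1) / y0 \<le> (x - 1) / y \<and> (x - 1) / y < (x0 - 1) / y0 + real n * \<alpha>
         \<and> ((x - 1) / y, 1) \<in> Omega x0 y0 \<alpha> n
         \<and> winner Lam ((x - 1) / y) 1 (x, y)"
proof -
  have c1: "0 < b*x - a*y" and c2: "b*x - a*y \<le> 1"
    using win by (auto simp: winner_def candidate_def)
  have wmax: "\<And>w. candidate Lam a b w \<Longrightarrow> fst w / snd w \<le> x / y"
    and wtie: "\<And>w. candidate Lam a b w \<Longrightarrow> fst w / snd w = x / y \<Longrightarrow> norm (x,y) \<le> norm w"
    using win by (auto simp: winner_def)
  have b0: "0 < b" and b1: "b \<le> 1" and alo: "x0 / y0 * b - 1 / y0 \<le> a"
    and ahi: "a < (x0 / y0 + real n * \<alpha>) * b - 1 / y0"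
    using ab_in by (auto simp: Omega_def)
  have yy0: "y0 \<le> y" using y0_min xy_in y_pos by blast
  have alo': "b*x0 - a*y0 \<le> 1" using alo y0_pos by (simp add: field_simps)
  have ab_lt: "a/b < x/y" using c1 b0 y_pos by (simp add: field_simps)
  have r0: "x0/y0 \<le> x/y"
  proof (cases "0 < b*x0 - a*y0")
    case True
    hence "candidate Lam a b (x0,y0)" using alo' x0y0_in y0_pos by (simp add: candidate_def)
    thus ?thesis using wmax by fastforce
  next
    case False
    hence "x0/y0 \<le> a/b" using b0 y0_pos by (simp add: field_simps)
    thus ?thesis using ab_lt by linarith
  qed
  have iy: "1/y \<le> 1/y0" using yy0 y0_pos by (simp add: frac_le)
  have e1: "(x-1)/y = x/y - 1/y" using y_pos by (simp add: diff_divide_distrib)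
  have e0: "(x0-1)/y0 = x0/y0 - 1/y0" using y0_pos by (simp add: diff_divide_distrib)
  have g1: "(x0 - 1) / y0 \<le> (x - 1) / y" using r0 iy e1 e0 by linarith
  have xle: "x/y \<le> a/b + 1/(b*y)" using c2 b0 y_pos by (simp add: field_simps)
  have ahb: "a/b < x0/y0 + real n*\<alpha> - 1/(y0*b)" using ahi b0 y0_pos by (simp add: field_simps)
  have kk: "(1/y)*(1/b - 1) \<le> (1/y0)*(1/b - 1)"
    using iy b0 b1 by (intro mult_right_mono) (auto simp: field_simps)
  have g2: "(x - 1) / y < (x0 - 1) / y0 + real n * \<alpha>"
  proof -
    have "(x-1)/y \<le> a/b + 1/(b*y) - 1/y" using xle e1 by linarith
    also have "\<dots> = a/b + (1/y)*(1/b - 1)" using b0 y_pos by (simp add: field_simps)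
    also have "\<dots> < x0/y0 + real n*\<alpha> - 1/(y0*b) + (1/y0)*(1/b - 1)" using ahb kk by linarith
    also have "\<dots> = (x0 - 1) / y0 + real n * \<alpha>" using y0_pos b0 by (simp add: field_simps)
    finally show ?thesis .
  qed
  define a' where "a' = (x-1)/y"
  have g3: "(a', 1) \<in> Omega x0 y0 \<alpha> n"
    using g1 g2 e0 unfolding a'_def Omega_def by (auto simp: diff_divide_distrib)
  have xa: "x - a' * y = 1" using y_pos unfolding a'_def by simp
  have transfer: "candidate Lam a b w" if cw: "candidate Lam a' 1 w" and rw: "x/y \<le> fst w / snd w" for w
  proof -
    obtain u v where w: "w = (u,v)" by (cases w)
    have v0: "v > 0" and uv1: "0 < u - a' * v" and uv2: "u - a' * v \<le> 1" and wl: "(u,v) \<in> Lam"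
      using cw w by (auto simp: candidate_def)
    define s where "s = v/y"
    define r where "r = u - s*x"
    have s0: "s > 0" using v0 y_pos s_def by simp
    have r0: "r \<ge> 0" using rw w v0 y_pos unfolding r_def s_def by (simp add: field_simps)
    have vs: "v = s*y" using y_pos s_def by simp
    have us: "u = s*x + r" using r_def by simp
    have sr: "s + r \<le> 1" using uv2 xa us vs by (simp add: algebra_simps)
    have "b * u - a * v = s * (b * x - a * y) + r * b" using us vs by (simp add: algebra_simps)
    also have "\<dots> \<le> s + r"
      using c2 s0 r0 b1 by (smt (verit) mult_left_mono mult_right_mono mult.commute mult_cancel_left1)
    finally have up: "b * u - a * v \<le> 1" using sr by linarith
    have "a/b < u/v" using ab_lt rw w by simp
    hence lo: "0 < b * u - a * v" using b0 v0 by (simp add: field_simps)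
    show ?thesis using up lo wl v0 w by (simp add: candidate_def)
  qed
  have g4: "winner Lam a' 1 (x, y)"
    unfolding winner_def
  proof (intro conjI allI impI)
    show "candidate Lam a' 1 (x, y)" using xa xy_in y_pos by (simp add: candidate_def)
  next
    fix w assume cw: "candidate Lam a' 1 w"
    show "fst w / snd w \<le> fst (x, y) / snd (x, y)"
    proof (rule ccontr)
      assume nt: "\<not> fst w / snd w \<le> fst (x, y) / snd (x, y)"
      hence "x/y \<le> fst w / snd w" by simp
      hence "candidate Lam a b w" using transfer cw by blast
      thus False using wmax nt by fastforce
    qed
  next
    fix w assume h: "candidate Lam a' 1 w \<and> fst w / snd w = fst (x, y) / snd (x, y)"
    hence "candidate Lam a b w" using transfer by auto
    thus "norm (x, y) \<le> norm w" using wtie h by auto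
  qed
  show ?thesis using g1 g2 g3 g4 unfolding a'_def by blast
qed

end
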